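(* Let $v\ge1$, $n\ge1$, $\epsilon>0$, and let $(\mathcal{X},\mathcal{Y},\mathcal{I})$ be a $(v,b,r,\lambda)$-RPBD with $\mathcal{X}=\{1,\dots,v\}$. Let $Q(y|x)=\alpha e^\epsilon$ if $(x,y)\in\mathcal{I}$ and $Q(y|x)=\alpha$ otherwise, with $\alpha=\frac{1}{re^\epsilon+b-r}$. With $X_1,\dots,X_n$ i.i.d. $\sim P\in\Delta_v$ and $Y_i\sim Q(\cdot|X_i)$, the estimator $$\hat P_{n,x}(Y_1,\dots,Y_n)=\frac{1}{(r-\lambda)(e^\epsilon-1)}\left(\frac{N_x(Y_1,\dots,Y_n)}{n\alpha}-(\lambda e^\epsilon+(r-\lambda))\right),\quad N_x=\sum_{i=1}^n\mathbb{1}(Y_i\in\mathcal{I}_x),$$ is unbiased. Its risk under the squared loss is $$R_{v,n}(\ell_2^2,P,Q,\hat P_n)=\frac1n\left[\frac{re^\epsilon+(v-1)(\lambda e^\epsilon+r-\lambda)}{(r-\lambda)^2(e^\epsilon-1)^2v}\left[v(b-r)+(v-1)(r-\lambda)(e^\epsilon-1)\right]+\frac1v-\sum_{x\in\mathcal{X}}P_x^2\right],$$ and its worst-case risk is $$\sup_{P\in\Delta_v}R_{v,n}(\ell_2^2,P,Q,\hat P_n)=\frac{re^\epsilon+(v-1)(\lambda e^\epsilon+r-\lambda)}{(r-\lambda)^2(e^\epsilon-1)^2nv}\left[v(b-r)+(v-1)(r-\lambda)(e^\epsilon-1)\right],$$ attained when $P$ is the uniform distribution.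
   Context: $\Delta_v$ is the set of probability vectors on $\{1,\dots,v\}$. For an incidence structure $(\mathcal{X},\mathcal{Y},\mathcal{I})$, $\mathcal{I}\subset\mathcal{X}\times\mathcal{Y}$, let $\mathcal{I}_x=\{y:(x,y)\in\mathcal{I}\}$. For integers $v>0$, $b>r>\lambda\ge0$, a $(v,b,r,\lambda)$-RPBD (regular and pairwise-balanced design) is an incidence structure with $\mathcal{X},\mathcal{Y}$ nonempty finite, $|\mathcal{X}|=v$, $|\mathcal{Y}|=b$, $|\mathcal{I}_x|=r$ for all $x$, and $|\mathcal{I}_x\cap\mathcal{I}_{x'}|=\lambda$ for all $x\neq x'$. Risk: $R_{v,n}(\ell,P,Q,\hat P_n)=\mathbb{E}[\ell(P,\hat P_n(Y_1,\dots,Y_n))]$; $\ell_2^2(p,\hat p)=\sum_x(p_x-\hat p_x)^2$. *)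

theory Defs
  imports Complex_Main
begin

definition Ix :: "(nat \<times> 'b) set \<Rightarrow> nat \<Rightarrow> 'b set" where
  "Ix I x = {y. (x, y) \<in> I}"

definition RPBD :: "nat \<Rightarrow> nat \<Rightarrow> nat \<Rightarrow> nat \<Rightarrow> nat set \<Rightarrow> 'b set \<Rightarrow> (nat \<times> 'b) set \<Rightarrow> bool" where
  "RPBD v b r lam X Y I \<longleftrightarrow>
     0 < v \<and> r < b \<and> lam < r \<and>
     X \<noteq> {} \<and> Y \<noteq> {} \<and> finite X \<and> finite Y \<and> I \<subseteq> X \<times> Y \<and>
     card X = v \<and> card Y = b \<and>
     (\<forall>x\<in>X. card (Ix I x) = r) \<and>
     (\<forall>x\<in>X. \<forall>x'\<in>X. x \<noteq> x' \<longrightarrow> card (Ix I x \<inter> Ix I x') = lam)"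

definition prob_simplex :: "nat \<Rightarrow> (nat \<Rightarrow> real) set" where
  "prob_simplex v = {P. (\<forall>x\<in>{1..v}. 0 \<le> P x) \<and> (\<Sum>x=1..v. P x) = 1}"

definition uniform_dist :: "nat \<Rightarrow> (nat \<Rightarrow> real)" where
  "uniform_dist v = (\<lambda>x. 1 / real v)"

definition output_prob :: "nat \<Rightarrow> (nat \<Rightarrow> 'b \<Rightarrow> real) \<Rightarrow> (nat \<Rightarrow> real) \<Rightarrow> 'b \<Rightarrow> real" where
  "output_prob v Q P y = (\<Sum>x=1..v. P x * Q x y)"

definition expect_iid :: "'b set \<Rightarrow> nat \<Rightarrow> ('b \<Rightarrow> real) \<Rightarrow> ('b list \<Rightarrow> real) \<Rightarrow> real" where
  "expect_iid Y n q f = (\<Sum>ys\<in>{ys. set ys \<subseteq> Y \<and> length ys = n}. prod_list (map q ys) * f ys)"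

definition Ncount :: "(nat \<times> 'b) set \<Rightarrow> 'b list \<Rightarrow> nat \<Rightarrow> nat" where
  "Ncount I ys x = length (filter (\<lambda>y. y \<in> Ix I x) ys)"

definition estimator :: "(nat \<times> 'b) set \<Rightarrow> nat \<Rightarrow> nat \<Rightarrow> real \<Rightarrow> real \<Rightarrow> 'b list \<Rightarrow> nat \<Rightarrow> real" where
  "estimator I r lam eps alpha ys x =
     1 / ((real r - real lam) * (exp eps - 1)) *
     (real (Ncount I ys x) / (real (length ys) * alpha) - (real lam * exp eps + (real r - real lam)))"

definition l2sq :: "nat \<Rightarrow> (nat \<Rightarrow> real) \<Rightarrow> (nat \<Rightarrow> real) \<Rightarrow> real" where
  "l2sq v p ph = (\<Sum>x=1..v. (p x - ph x)^2)"

definition risk :: "nat \<Rightarrow> nat \<Rightarrow> 'b set \<Rightarrow> (nat \<Rightarrow> 'b \<Rightarrow> real) \<Rightarrow> (nat \<Rightarrow> real) \<Rightarrow> ('b list \<Rightarrow> nat \<Rightarrow> real) \<Rightarrow> real" where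
  "risk v n Y Q P est = expect_iid Y n (output_prob v Q P) (\<lambda>ys. l2sq v P (est ys))"

end

theory Submission imports Defs begin

definition LS :: "'b set \<Rightarrow> nat \<Rightarrow> 'b list set" where
  "LS Y n = {ys. set ys \<subseteq> Y \<and> length ys = n}"

lemma LS_Suc: "LS Y (Suc n) = (\<lambda>(y,ys). y#ys) ` (Y \<times> LS Y n)"
  unfolding LS_def by (auto simp: length_Suc_conv image_iff)

lemma expect_Suc:
  assumes "finite Y"
  shows "expect_iid Y (Suc n) q f = (\<Sum>y\<in>Y. q y * expect_iid Y n q (\<lambda>ys. f (y#ys)))"
proof -
  have inj: "inj_on (\<lambda>(y,ys). y#ys) (Y \<times> LS Y n)" by (auto simp: inj_on_def)
  have "expect_iid Y (Suc n) q f = (\<Sum>ys\<in>LS Y (Suc n). prod_list (map q ys) * f ys)"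
    unfolding expect_iid_def LS_def by simp
  also have "\<dots> = (\<Sum>(y,ys)\<in>Y \<times> LS Y n. q y * (prod_list (map q ys) * f (y#ys)))"
    unfolding LS_Suc by (subst sum.reindex[OF inj]) (simp add: case_prod_beta mult.assoc)
  also have "\<dots> = (\<Sum>y\<in>Y. \<Sum>ys\<in>LS Y n. q y * (prod_list (map q ys) * f (y#ys)))"
    by (rule sum.cartesian_product[symmetric])
  also have "\<dots> = (\<Sum>y\<in>Y. q y * expect_iid Y n q (\<lambda>ys. f (y#ys)))"
    unfolding expect_iid_def LS_def by (simp add: sum_distrib_left)
  finally show ?thesis .
qed

lemma expect_0: "expect_iid Y 0 q f = f []"
proof -
  have "{ys. set ys \<subseteq> Y \<and> length ys = 0} = {[]}" by auto
  then show ?thesis unfolding expect_iid_def by simp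
qed

lemma expect_lin:
  "expect_iid Y n q (\<lambda>ys. a * f ys + b * g ys + c) =
   a * expect_iid Y n q f + b * expect_iid Y n q g + c * expect_iid Y n q (\<lambda>_. 1)"
  unfolding expect_iid_def by (simp add: sum.distrib sum_distrib_left algebra_simps)

lemma expect_cong:
  assumes "\<And>ys. set ys \<subseteq> Y \<Longrightarrow> length ys = n \<Longrightarrow> f ys = g ys"
  shows "expect_iid Y n q f = expect_iid Y n q g"
  unfolding expect_iid_def using assms by (intro sum.cong) auto

lemma expect_sum:
  "expect_iid Y n q (\<lambda>ys. \<Sum>x\<in>S. f x ys) = (\<Sum>x\<in>S. expect_iid Y n q (f x))"
  unfolding expect_iid_def by (simp add: sum_distrib_left sum.swap[of _ S])

lemma moments:
  fixes A :: "'b set" and Y :: "'b set"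
  assumes "finite Y" "(\<Sum>y\<in>Y. q y) = 1"
  defines "p \<equiv> (\<Sum>y\<in>Y \<inter> A. q y)"
  shows "expect_iid Y n q (\<lambda>_. 1) = 1
       \<and> expect_iid Y n q (\<lambda>ys. real (length (filter (\<lambda>y. y \<in> A) ys))) = real n * p
       \<and> expect_iid Y n q (\<lambda>ys. (real (length (filter (\<lambda>y. y \<in> A) ys)))^2)
            = real n * p + real n * (real n - 1) * p^2"
proof (induction n)
  case 0
  then show ?case by (simp add: expect_0)
next
  case (Suc n)
  let ?N = "\<lambda>ys. real (length (filter (\<lambda>y. y \<in> A) ys))"
  let ?i = "\<lambda>y. if y \<in> A then 1 else (0::real)"
  have E1: "expect_iid Y n q (\<lambda>_. 1) = 1" and E2: "expect_iid Y n q ?N = real n * p"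
   and E3: "expect_iid Y n q (\<lambda>ys. (?N ys)^2) = real n * p + real n * (real n - 1) * p^2"
    using Suc by auto
  have pi: "(\<Sum>y\<in>Y. q y * ?i y) = p"
    unfolding p_def using assms(1) by (simp add: sum.If_cases Int_commute if_distrib cong: if_cong)
  have a: "expect_iid Y (Suc n) q (\<lambda>_. 1) = 1"
    using E1 assms(2) by (simp add: expect_Suc[OF assms(1)])
  have b1: "expect_iid Y n q (\<lambda>ys. ?N (y#ys)) = ?i y + real n * p" for y
  proof -
    have "expect_iid Y n q (\<lambda>ys. ?N (y#ys)) = expect_iid Y n q (\<lambda>ys. 1 * ?N ys + 0 * ?N ys + ?i y)"
      by (intro expect_cong) auto
    also have "\<dots> = ?i y + real n * p"
      unfolding expect_lin E1 E2 by simp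
    finally show ?thesis .
  qed
  have b: "expect_iid Y (Suc n) q ?N = real (Suc n) * p"
    unfolding expect_Suc[OF assms(1)] b1
    using pi assms(2) by (simp add: algebra_simps sum.distrib sum_distrib_right[symmetric] sum_distrib_left[symmetric])
  have c1: "expect_iid Y n q (\<lambda>ys. (?N (y#ys))^2) = ?i y + 2 * ?i y * (real n * p) + (real n * p + real n * (real n - 1) * p^2)" for y
  proof -
    have "expect_iid Y n q (\<lambda>ys. (?N (y#ys))^2) = expect_iid Y n q (\<lambda>ys. (2 * ?i y) * ?N ys + 1 * (?N ys)^2 + ?i y)"
      by (intro expect_cong) (auto simp: power2_eq_square algebra_simps)
    also have "\<dots> = ?i y + 2 * ?i y * (real n * p) + (real n * p + real n * (real n - 1) * p^2)"
      unfolding expect_lin E1 E2 E3 by simp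
    finally show ?thesis .
  qed
  have c: "expect_iid Y (Suc n) q (\<lambda>ys. (?N ys)^2) = real (Suc n) * p + real (Suc n) * (real (Suc n) - 1) * p^2"
  proof -
    have "expect_iid Y (Suc n) q (\<lambda>ys. (?N ys)^2) = (\<Sum>y\<in>Y. q y * ?i y) * (1 + 2 * (real n * p)) + (\<Sum>y\<in>Y. q y) * (real n * p + real n * (real n - 1) * p^2)"
      unfolding expect_Suc[OF assms(1)] c1 sum_distrib_right sum.distrib[symmetric]
      by (intro sum.cong) (auto simp: algebra_simps)
    also have "\<dots> = real (Suc n) * p + real (Suc n) * (real (Suc n) - 1) * p^2"
      using pi assms(2) by (simp add: algebra_simps power2_eq_square)
    finally show ?thesis .
  qed
  show ?case using a b c by blast
qed

lemma sum_if_card: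
  assumes "finite B"
  shows "(\<Sum>y\<in>B. if y \<in> A then a else b) = a * real (card (B \<inter> A)) + b * (real (card B) - real (card (B \<inter> A)))"
proof -
  have "card (B - A) = card B - card (B \<inter> A)" using assms by (metis card_Diff_subset_Int Diff_Int2 Diff_Int_distrib2 card_Diff_subset inf.cobounded1 finite_Int)
  moreover have "card (B \<inter> A) \<le> card B" using assms by (simp add: card_mono)
  ultimately show ?thesis using assms
    by (simp add: sum.If_cases Int_def Diff_eq of_nat_diff)
qed

theorem theorem6:
  fixes v b r lam n :: nat and eps :: real and Y :: "'b set" and I :: "(nat \<times> 'b) set"
  assumes rpbd: "RPBD v b r lam {1..v} Y I"
    and v: "1 \<le> v" and n: "1 \<le> n" and eps: "0 < eps"
  defines "alpha \<equiv> 1 / (real r * exp eps + real b - real r)"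
  defines "Q \<equiv> (\<lambda>x y. if (x, y) \<in> I then alpha * exp eps else alpha)"
  defines "Ph \<equiv> estimator I r lam eps alpha"
  defines "C \<equiv> (real r * exp eps + (real v - 1) * (real lam * exp eps + real r - real lam))
                / ((real r - real lam)^2 * (exp eps - 1)^2 * real v)
              * (real v * (real b - real r) + (real v - 1) * (real r - real lam) * (exp eps - 1))"
  shows "(\<forall>P\<in>prob_simplex v. \<forall>x\<in>{1..v}.
            expect_iid Y n (output_prob v Q P) (\<lambda>ys. Ph ys x) = P x)
       \<and> (\<forall>P\<in>prob_simplex v.
            risk v n Y Q P Ph = 1 / real n * (C + 1 / real v - (\<Sum>x=1..v. (P x)^2)))
       \<and> (SUP P\<in>prob_simplex v. risk v n Y Q P Ph) = C / real n
       \<and> risk v n Y Q (uniform_dist v) Ph = C / real n"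
proof -
  define e where "e = exp eps"
  define D where "D = (real r - real lam) * (e - 1)"
  define c where "c = real lam * e + (real r - real lam)"
  define K where "K = real r * e + real b - real r"
  have finY: "finite Y" and rb: "r < b" and lr: "lam < r" and IY: "I \<subseteq> {1..v} \<times> Y"
    and cY: "card Y = b" and cI: "\<And>x. x \<in> {1..v} \<Longrightarrow> card (Ix I x) = r"
    and cII: "\<And>x x'. x \<in> {1..v} \<Longrightarrow> x' \<in> {1..v} \<Longrightarrow> x \<noteq> x' \<Longrightarrow> card (Ix I x \<inter> Ix I x') = lam"
    using rpbd unfolding RPBD_def by auto
  have e1: "e > 1" unfolding e_def using eps by simp
  have Dpos: "D > 0" unfolding D_def using e1 lr by simp
  have Kpos: "K > 0" unfolding K_def using e1 rb
    by (smt (verit) mult_le_cancel_left1 of_nat_0_le_iff of_nat_less_iff)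
  have alphaK: "alpha = 1 / K" unfolding alpha_def K_def e_def by simp
  have apos: "alpha > 0" using Kpos alphaK by simp
  have nposr: "real n > 0" using n by simp
  have vpos: "real v > 0" using v by simp
  have IxY: "Ix I x \<subseteq> Y" for x using IY unfolding Ix_def by auto
  have Qx: "Q x y = (if y \<in> Ix I x then alpha * e else alpha)" for x y
    unfolding Q_def Ix_def e_def by simp
  have sumQ: "(\<Sum>y\<in>Y. Q x y) = 1" if x: "x \<in> {1..v}" for x
  proof -
    have "(\<Sum>y\<in>Y. Q x y) = alpha * e * real r + alpha * (real b - real r)"
      unfolding Qx sum_if_card[OF finY] using cI[OF x] IxY[of x] cY
      by (simp add: Int_absorb1 inf_commute)
    also have "\<dots> = 1" using alphaK Kpos unfolding K_def by (simp add: field_simps)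
    finally show ?thesis .
  qed
  have sumQI: "(\<Sum>y\<in>Ix I x. Q x' y) = (if x' = x then alpha * e * real r else alpha * c)"
    if x: "x \<in> {1..v}" and x': "x' \<in> {1..v}" for x x'
  proof (cases "x' = x")
    case True
    have fin: "finite (Ix I x)" using IxY finY finite_subset by blast
    show ?thesis unfolding Qx sum_if_card[OF fin] using True cI[OF x] by simp
  next
    case False
    have fin: "finite (Ix I x)" using IxY finY finite_subset by blast
    have "(\<Sum>y\<in>Ix I x. Q x' y) = alpha * e * real lam + alpha * (real r - real lam)"
      unfolding Qx sum_if_card[OF fin] using False cI[OF x] cII[OF x x'] by simp
    then show ?thesis using False unfolding c_def by (simp add: algebra_simps)
  qed
  define T where "T = (\<lambda>(P::nat\<Rightarrow>real) (x::nat). (c * K - c^2) / (real n * D^2) + P x * (K - 2*c) / (real n * D) - (P x)^2 / real n)"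
  have key: "expect_iid Y n (output_prob v Q P) (\<lambda>ys. Ph ys x) = P x
           \<and> expect_iid Y n (output_prob v Q P) (\<lambda>ys. (P x - Ph ys x)^2) = T P x"
    if P: "P \<in> prob_simplex v" and x: "x \<in> {1..v}" for P x
  proof -
    let ?q = "output_prob v Q P"
    have sP: "(\<Sum>x=1..v. P x) = 1" using P unfolding prob_simplex_def by auto
    have sq: "(\<Sum>y\<in>Y. ?q y) = 1"
    proof -
      have "(\<Sum>y\<in>Y. ?q y) = (\<Sum>x=1..v. P x * (\<Sum>y\<in>Y. Q x y))"
        unfolding output_prob_def by (simp add: sum.swap[of _ Y] sum_distrib_left)
      also have "\<dots> = (\<Sum>x=1..v. P x)" using sumQ by simp
      finally show ?thesis using sP by simp
    qed
    have px: "(\<Sum>y\<in>Y \<inter> Ix I x. ?q y) = alpha * (c + P x * D)"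
    proof -
      have "(\<Sum>y\<in>Y \<inter> Ix I x. ?q y) = (\<Sum>x'=1..v. P x' * (\<Sum>y\<in>Ix I x. Q x' y))"
        unfolding output_prob_def using IxY[of x]
        by (simp add: Int_absorb1 sum.swap[of _ "Ix I x"] sum_distrib_left)
      also have "\<dots> = (\<Sum>x'=1..v. P x' * (alpha * c) + (if x' = x then P x' * (alpha * e * real r - alpha * c) else 0))"
        by (intro sum.cong) (auto simp: sumQI[OF x] algebra_simps)
      also have "\<dots> = alpha * c + P x * (alpha * e * real r - alpha * c)"
        using x sP by (simp add: sum.distrib sum_distrib_right[symmetric])
      also have "\<dots> = alpha * (c + P x * D)" unfolding c_def D_def by (simp add: algebra_simps)
      finally show ?thesis .
    qed
    let ?N = "\<lambda>ys. real (length (filter (\<lambda>y. y \<in> Ix I x) ys))"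
    have M: "expect_iid Y n ?q (\<lambda>_. 1) = 1"
            "expect_iid Y n ?q ?N = real n * (alpha * (c + P x * D))"
            "expect_iid Y n ?q (\<lambda>ys. (?N ys)^2) = real n * (alpha * (c + P x * D)) + real n * (real n - 1) * (alpha * (c + P x * D))^2"
      using moments[OF finY sq, of n "Ix I x"] unfolding px by auto
    define a where "a = 1 / (D * real n * alpha)"
    define bb where "bb = - c / D"
    have Phe: "Ph ys x = a * ?N ys + bb" if "length ys = n" for ys
    proof -
      have "Ph ys x = 1 / D * (?N ys / (real n * alpha) - c)"
        unfolding Ph_def estimator_def Ncount_def D_def c_def e_def using that by simp
      also have "\<dots> = a * ?N ys + bb"
        unfolding a_def bb_def using Dpos apos nposr by (simp add: field_simps)
      finally show ?thesis .
    qed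
    have E1: "expect_iid Y n ?q (\<lambda>ys. Ph ys x) = P x"
    proof -
      have "expect_iid Y n ?q (\<lambda>ys. Ph ys x) = expect_iid Y n ?q (\<lambda>ys. a * ?N ys + 0 * ?N ys + bb)"
        by (intro expect_cong) (simp add: Phe)
      also have "\<dots> = a * (real n * (alpha * (c + P x * D))) + bb"
        unfolding expect_lin M by simp
      also have "\<dots> = P x" unfolding a_def bb_def using Dpos apos nposr by (simp add: field_simps)
      finally show ?thesis .
    qed
    have E2: "expect_iid Y n ?q (\<lambda>ys. (P x - Ph ys x)^2) = T P x"
    proof -
      have "expect_iid Y n ?q (\<lambda>ys. (P x - Ph ys x)^2) = expect_iid Y n ?q (\<lambda>ys. (a^2) * (?N ys)^2 + (2*a*bb - 2 * P x * a) * ?N ys + (P x - bb)^2)"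
        by (intro expect_cong) (simp add: Phe power2_eq_square algebra_simps)
      also have "\<dots> = a^2 * (real n * (alpha * (c + P x * D)) + real n * (real n - 1) * (alpha * (c + P x * D))^2)
           + (2*a*bb - 2 * P x * a) * (real n * (alpha * (c + P x * D))) + (P x - bb)^2"
        unfolding expect_lin M by simp
      also have "\<dots> = T P x" unfolding a_def bb_def T_def alphaK using Dpos Kpos nposr
        by (simp add: field_simps power2_eq_square)
      finally show ?thesis .
    qed
    show ?thesis using E1 E2 by blast
  qed
  have riskP: "risk v n Y Q P Ph = 1 / real n * (C + 1 / real v - (\<Sum>x=1..v. (P x)^2))"
    if P: "P \<in> prob_simplex v" for P
  proof -
    have sP: "(\<Sum>x=1..v. P x) = 1" using P unfolding prob_simplex_def by auto
    have "risk v n Y Q P Ph = (\<Sum>x=1..v. T P x)"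
      unfolding risk_def l2sq_def expect_sum using key[OF P] by simp
    also have "\<dots> = real v * ((c * K - c^2) / (real n * D^2)) + (K - 2*c) / (real n * D) - (\<Sum>x=1..v. (P x)^2) / real n"
      unfolding T_def using sP by (simp add: sum.distrib sum_subtractf sum_divide_distrib[symmetric] sum_distrib_right[symmetric])
    also have "\<dots> = 1 / real n * (C + 1 / real v - (\<Sum>x=1..v. (P x)^2))"
    proof -
      define B where "B = real b - real r"
      have C': "C = (real v * c + D) * (real v * B + (real v - 1) * D) / (D^2 * real v)"
      proof -
        have h1: "real r * exp eps + (real v - 1) * (real lam * exp eps + real r - real lam) = real v * c + D"
          unfolding c_def D_def e_def by (simp add: algebra_simps)
        have h2: "(real r - real lam)^2 * (exp eps - 1)^2 = D^2"
          unfolding D_def e_def by (simp add: power_mult_distrib)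
        have h3: "(real v - 1) * (real r - real lam) * (exp eps - 1) = (real v - 1) * D"
          unfolding D_def e_def by simp
        show ?thesis unfolding C_def h1 h2 h3 B_def by simp
      qed
      have K': "K = c + D + B" unfolding K_def c_def D_def B_def by (simp add: algebra_simps)
      show ?thesis unfolding C' K' using Dpos vpos nposr
        by (simp add: field_simps power2_eq_square)
    qed
    finally show ?thesis .
  qed
  have unif: "uniform_dist v \<in> prob_simplex v"
    unfolding prob_simplex_def uniform_dist_def using vpos by simp
  have sq_ge: "(\<Sum>x=1..v. (P x)^2) \<ge> 1 / real v" if P: "P \<in> prob_simplex v" for P
  proof -
    have sP: "(\<Sum>x=1..v. P x) = 1" using P unfolding prob_simplex_def by auto
    have "0 \<le> (\<Sum>x=1..v. (P x - 1 / real v)^2)" by (simp add: sum_nonneg)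
    also have "\<dots> = (\<Sum>x=1..v. (P x)^2) - 2 / real v * (\<Sum>x=1..v. P x) + real v * (1 / real v)^2"
      by (simp add: power2_diff sum.distrib sum_subtractf sum_distrib_left sum_divide_distrib algebra_simps)
    finally show ?thesis using sP vpos by (simp add: power2_eq_square)
  qed
  have runif: "risk v n Y Q (uniform_dist v) Ph = C / real n"
    using riskP[OF unif] vpos by (simp add: uniform_dist_def power2_eq_square)
  have le: "risk v n Y Q P Ph \<le> C / real n" if "P \<in> prob_simplex v" for P
    using riskP[OF that] sq_ge[OF that] nposr by (simp add: divide_right_mono field_simps)
  have sup: "(SUP P\<in>prob_simplex v. risk v n Y Q P Ph) = C / real n"
    apply (rule cSup_eq_maximum)
    using unif runif le by (auto intro: image_eqI[where x="uniform_dist v"])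
  show ?thesis using key riskP sup runif by blast
qed

end
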